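(* Let $\phi:F\langle z,y\rangle\to F\langle \alpha,\delta\rangle$ be the homomorphism of free groups with $\phi(z)=\alpha^4\delta^2$ and $\phi(y)=\delta^{-1}\alpha\delta$. Let $w=\dots y^{n_{k-1}}z^{n_k}$ or $w=\dots z^{n_{k-1}}y^{n_k}$ be a reduced word of length $k\ge1$ in alternating nonzero powers of $z$ and $y$ (all $n_i\neq0$). Then: (a) if $w$ ends in a nonzero power of $z$, the reduced form of $\phi(w)$ ends in either $\delta^{-1}\alpha^{-4}$ or $\alpha^4\delta^2$; (b) if $w$ ends in a nonzero power of $y$, the reduced form of $\phi(w)$ ends in $\alpha^n\delta$ for some $n\neq0$. *)

theory Defs
  imports Main "HOL-Library.Sublist"
begin

text \<open>Words in a free group over generators of type 'g: lists of letters (g, s),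
  where s = True means g and s = False means g inverse.\<close>

type_synonym 'g letter = "'g \<times> bool"

definition inv_letter :: "'g letter \<Rightarrow> 'g letter" where
  "inv_letter x = (fst x, \<not> snd x)"

definition inv_word :: "'g letter list \<Rightarrow> 'g letter list" where
  "inv_word xs = rev (map inv_letter xs)"

fun push_letter :: "'g letter \<Rightarrow> 'g letter list \<Rightarrow> 'g letter list" where
  "push_letter x [] = [x]"
| "push_letter x (y # ys) = (if y = inv_letter x then ys else x # y # ys)"

definition reduced_form :: "'g letter list \<Rightarrow> 'g letter list" where
  "reduced_form xs = foldr push_letter xs []"

definition reduced :: "'g letter list \<Rightarrow> bool" where
  "reduced xs \<longleftrightarrow> (\<forall>i. Suc i < length xs \<longrightarrow> xs ! Suc i \<noteq> inv_letter (xs ! i))"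

definition gpow :: "'g \<Rightarrow> int \<Rightarrow> 'g letter list" where
  "gpow g n = (if n \<ge> 0 then replicate (nat n) (g, True) else replicate (nat (- n)) (g, False))"

datatype zy = Z | Y
datatype ad = Alpha | Delta

definition phi_gen :: "zy \<Rightarrow> ad letter list" where
  "phi_gen g = (case g of
      Z \<Rightarrow> gpow Alpha 4 @ gpow Delta 2
    | Y \<Rightarrow> [(Delta, False), (Alpha, True), (Delta, True)])"

definition phi_letter :: "zy letter \<Rightarrow> ad letter list" where
  "phi_letter x = (if snd x then phi_gen (fst x) else inv_word (phi_gen (fst x)))"

definition phi_word :: "zy letter list \<Rightarrow> ad letter list" where
  "phi_word w = concat (map phi_letter w)"

definition syllables_word :: "('g \<times> int) list \<Rightarrow> 'g letter list" where
  "syllables_word ns = concat (map (\<lambda>(g, n). gpow g n) ns)"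

end

theory Submission imports Defs begin

lemma push_nc: "st = [] \<or> hd st \<noteq> inv_letter x \<Longrightarrow> push_letter x st = x # st"
  by (cases st) auto

lemma inv_simps[simp]: "inv_letter (g, b) = (g, \<not> b)" by (simp add: inv_letter_def)

lemma gpow_alt: "gpow g m = replicate (nat \<bar>m\<bar>) (g, 0 \<le> m)"
  by (simp add: gpow_def)

lemma phi_word_rep: "phi_word (replicate k x) = concat (replicate k (phi_letter x))"
  by (induct k) (auto simp: phi_word_def)

lemma phi_word_append: "phi_word (xs @ ys) = phi_word xs @ phi_word ys"
  by (simp add: phi_word_def)

lemma phiY: "phi_letter (Y, b) = [(Delta,False), (Alpha,b), (Delta,True)]"
  by (cases b) (auto simp: phi_letter_def phi_gen_def inv_word_def inv_letter_def)

lemma phiZT: "phi_letter (Z, True) = [(Alpha,True),(Alpha,True),(Alpha,True),(Alpha,True),(Delta,True),(Delta,True)]"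
  by (simp add: phi_letter_def phi_gen_def gpow_def numeral_eq_Suc)

lemma phiZF: "phi_letter (Z, False) = [(Delta,False),(Delta,False),(Alpha,False),(Alpha,False),(Alpha,False),(Alpha,False)]"
  by (simp add: phi_letter_def phi_gen_def gpow_def numeral_eq_Suc inv_word_def inv_letter_def)

definition stk :: "(zy \<times> int) list \<Rightarrow> ad letter list" where
  "stk ns = reduced_form (phi_word (syllables_word ns))"

lemma stk_cons: "stk (p # rest) = foldr push_letter (phi_word (gpow (fst p) (snd p))) (stk rest)"
  by (cases p) (simp add: stk_def syllables_word_def reduced_form_def phi_word_append)

lemma stk_single: "stk [p] = foldr push_letter (phi_word (gpow (fst p) (snd p))) []"
  by (cases p) (simp add: stk_def syllables_word_def reduced_form_def)

lemma Y_nc: "st = [] \<or> hd st \<noteq> (Delta,False) \<Longrightarrow>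
  foldr push_letter (concat (replicate (Suc k) [(Delta,False), (Alpha,b), (Delta,True)])) st
   = (Delta,False) # replicate (Suc k) (Alpha,b) @ (Delta,True) # st"
proof (induct k)
  case 0
  then show ?case by (simp add: push_nc)
next
  case (Suc k)
  then show ?case by simp
qed

lemma Y_c: "st = [] \<or> hd st \<noteq> (Alpha, \<not> b) \<Longrightarrow>
  foldr push_letter (concat (replicate (Suc k) [(Delta,False), (Alpha,b), (Delta,True)])) ((Delta,False) # st)
   = (Delta,False) # replicate (Suc k) (Alpha,b) @ st"
proof (induct k)
  case 0
  then show ?case by (simp add: push_nc)
next
  case (Suc k)
  then show ?case by simp
qed

abbreviation "Bp \<equiv> [(Alpha,True),(Alpha,True),(Alpha,True),(Alpha,True),(Delta,True),(Delta,True)]"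
abbreviation "Bm \<equiv> [(Delta,False),(Delta,False),(Alpha,False),(Alpha,False),(Alpha,False),(Alpha,False)]"

lemma Zp_nc: "st = [] \<or> hd st \<noteq> (Delta,False) \<Longrightarrow>
  foldr push_letter (concat (replicate (Suc k) Bp)) st = concat (replicate (Suc k) Bp) @ st"
proof (induct k)
  case 0
  then show ?case by (simp add: push_nc)
next
  case (Suc k)
  then show ?case by simp
qed

lemma Zn_nc: "st = [] \<or> hd st \<noteq> (Alpha,True) \<Longrightarrow>
  foldr push_letter (concat (replicate (Suc k) Bm)) st = concat (replicate (Suc k) Bm) @ st"
proof (induct k)
  case 0
  then show ?case by (simp add: push_nc)
next
  case (Suc k)
  then show ?case by simp
qed

lemma Zp_c: "st = [] \<or> hd st \<noteq> (Delta,False) \<Longrightarrow>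
  foldr push_letter (concat (replicate (Suc k) Bp)) ((Delta,False) # st)
   = concat (replicate k Bp) @ [(Alpha,True),(Alpha,True),(Alpha,True),(Alpha,True),(Delta,True)] @ st"
proof (induct k)
  case 0
  then show ?case by (simp add: push_nc)
next
  case (Suc k)
  then show ?case by (cases k) simp_all
qed


definition sufcond :: "ad letter list \<Rightarrow> ad letter list \<Rightarrow> bool" where
  "sufcond s st \<longleftrightarrow> suffix s st \<and> (hd st = (Delta,False) \<longrightarrow> suffix s (tl st))"

lemma suf_app: "sufcond s st \<Longrightarrow> X \<noteq> [] \<Longrightarrow> sufcond s (X @ st)"
  unfolding sufcond_def by (cases X) (auto simp: suffix_def)

lemma suf_app2: "sufcond s ((Delta,False) # st) \<Longrightarrow> X \<noteq> [] \<Longrightarrow> sufcond s (X @ st)"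
  unfolding sufcond_def by (cases X) (auto simp: suffix_def)

definition Shape :: "zy \<times> int \<Rightarrow> ad letter list \<Rightarrow> bool" where
  "Shape p st \<longleftrightarrow>
    (fst p = Z \<and> snd p > 0 \<longrightarrow> (\<exists>T. st = [(Alpha,True),(Alpha,True),(Alpha,True),(Alpha,True),(Delta,True)] @ T))
  \<and> (fst p = Z \<and> snd p < 0 \<longrightarrow> (\<exists>T. st = Bm @ T))
  \<and> (fst p = Y \<longrightarrow> (\<exists>T. st = (Delta,False) # gpow Alpha (snd p) @ T))"

lemma nat_abs_Suc: "(n::int) \<noteq> 0 \<Longrightarrow> \<exists>k. nat \<bar>n\<bar> = Suc k"
  by (rule exI[of _ "nat \<bar>n\<bar> - 1"]) simp

lemma phi_gpow: "(n::int) \<noteq> 0 \<Longrightarrow> \<exists>k. phi_word (gpow g n) = concat (replicate (Suc k) (phi_letter (g, 0 \<le> n)))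
   \<and> gpow Alpha n = replicate (Suc k) (Alpha, 0 \<le> n)"
  using nat_abs_Suc[of n] by (auto simp: gpow_alt phi_word_rep)

lemma ShapeY: "Shape (Y,n) ((Delta,False) # gpow Alpha n @ T)" by (simp add: Shape_def)
lemma ShapeZp: "n > 0 \<Longrightarrow> Shape (Z,n) ([(Alpha,True),(Alpha,True),(Alpha,True),(Alpha,True),(Delta,True)] @ T)"
  by (simp add: Shape_def)
lemma ShapeZm: "n < 0 \<Longrightarrow> Shape (Z,n) (Bm @ T)" by (simp add: Shape_def)

lemma trans_step:
  assumes "fst p \<noteq> fst q" "snd p \<noteq> 0" "snd q \<noteq> 0" "Shape q st" "sufcond s st"
  shows "Shape p (foldr push_letter (phi_word (gpow (fst p) (snd p))) st)
       \<and> sufcond s (foldr push_letter (phi_word (gpow (fst p) (snd p))) st)"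
proof -
  obtain g n where p: "p = (g, n)" by (cases p)
  obtain h m where q: "q = (h, m)" by (cases q)
  from assms p q have n0: "n \<noteq> 0" and m0: "m \<noteq> 0" and gh: "g \<noteq> h" by auto
  obtain k where k: "phi_word (gpow g n) = concat (replicate (Suc k) (phi_letter (g, 0 \<le> n)))"
    and ka: "gpow Alpha n = replicate (Suc k) (Alpha, 0 \<le> n)"
    using phi_gpow[OF n0] by blast
  show ?thesis
  proof (cases g)
    case Y
    then have hZ: "h = Z" using gh by (cases h) auto
    show ?thesis
    proof (cases "m > 0")
      case True
      then obtain T where st: "st = [(Alpha,True),(Alpha,True),(Alpha,True),(Alpha,True),(Delta,True)] @ T"
        using assms(4) q hZ by (auto simp: Shape_def)
      have r: "foldr push_letter (phi_word (gpow g n)) st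
          = (Delta,False) # replicate (Suc k) (Alpha, 0 \<le> n) @ (Delta,True) # st"
        unfolding k unfolding Y phiY by (rule Y_nc) (simp add: st)
      have r1: "foldr push_letter (phi_word (gpow g n)) st = (Delta,False) # gpow Alpha n @ ((Delta,True) # st)"
        using r ka by simp
      have r2: "foldr push_letter (phi_word (gpow g n)) st = ((Delta,False) # gpow Alpha n @ [(Delta,True)]) @ st"
        using r1 by simp
      have A: "Shape p (foldr push_letter (phi_word (gpow g n)) st)"
        unfolding r1 unfolding p Y by (rule ShapeY)
      have B: "sufcond s (foldr push_letter (phi_word (gpow g n)) st)"
        unfolding r2 by (rule suf_app[OF assms(5)]) simp
      show ?thesis using A B p by simp
    next
      case False
      with m0 have "m < 0" by simp
      then obtain T where st: "st = Bm @ T"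
        using assms(4) q hZ by (auto simp: Shape_def)
      define st'' where "st'' = tl st"
      have st2: "st = (Delta,False) # st''" using st st''_def by simp
      have r: "foldr push_letter (phi_word (gpow g n)) st
          = (Delta,False) # replicate (Suc k) (Alpha, 0 \<le> n) @ st''"
        unfolding k unfolding Y phiY st2 by (rule Y_c) (simp add: st st''_def)
      have r1: "foldr push_letter (phi_word (gpow g n)) st = (Delta,False) # gpow Alpha n @ st''"
        using r ka by simp
      have r2: "foldr push_letter (phi_word (gpow g n)) st = ((Delta,False) # gpow Alpha n) @ st''"
        using r1 by simp
      have A: "Shape p (foldr push_letter (phi_word (gpow g n)) st)"
        unfolding r1 unfolding p Y by (rule ShapeY)
      have s5: "sufcond s ((Delta,False) # st'')" using assms(5) st2 by simp
      have B: "sufcond s (foldr push_letter (phi_word (gpow g n)) st)"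
        unfolding r2 by (rule suf_app2[OF s5]) simp
      show ?thesis using A B p by simp
    qed
  next
    case Z
    then have hY: "h = Y" using gh by (cases h) auto
    then obtain T where st: "st = (Delta,False) # gpow Alpha m @ T"
      using assms(4) q by (auto simp: Shape_def)
    obtain j where j: "gpow Alpha m = replicate (Suc j) (Alpha, 0 \<le> m)"
      using phi_gpow[OF m0] by blast
    show ?thesis
    proof (cases "n > 0")
      case True
      then have r: "foldr push_letter (phi_word (gpow g n)) st
          = concat (replicate k Bp) @ [(Alpha,True),(Alpha,True),(Alpha,True),(Alpha,True),(Delta,True)] @ (gpow Alpha m @ T)"
      proof -
        have pre: "gpow Alpha m @ T = [] \<or> hd (gpow Alpha m @ T) \<noteq> (Delta,False)" by (simp add: j)
        have "phi_letter (g, 0 \<le> n) = Bp" using True Z by (simp add: phiZT)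
        then show ?thesis unfolding k st using Zp_c[OF pre, of k] by simp
      qed
      have s5: "sufcond s ((Delta,False) # (gpow Alpha m @ T))" using assms(5) st by simp
      have B: "sufcond s (foldr push_letter (phi_word (gpow g n)) st)"
        unfolding r by (rule suf_app2[OF s5, of "concat (replicate k Bp) @ [(Alpha,True),(Alpha,True),(Alpha,True),(Alpha,True),(Delta,True)]", simplified append_assoc]) simp
      have A: "Shape p (foldr push_letter (phi_word (gpow g n)) st)"
      proof (cases k)
        case 0
        show ?thesis unfolding r unfolding p Z 0 using ShapeZp[OF True, of "gpow Alpha m @ T"] by simp
      next
        case (Suc k')
        show ?thesis unfolding r unfolding p Z Suc
          using ShapeZp[OF True, of "[(Delta,True)] @ concat (replicate k' Bp) @ [(Alpha,True),(Alpha,True),(Alpha,True),(Alpha,True),(Delta,True)] @ gpow Alpha m @ T"] by simp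
      qed
      show ?thesis using A B p by simp
    next
      case False
      with n0 have "n < 0" by simp
      then have r: "foldr push_letter (phi_word (gpow g n)) st
          = concat (replicate (Suc k) Bm) @ st"
      proof -
        have pre: "st = [] \<or> hd st \<noteq> (Alpha,True)" by (simp add: st)
        have "phi_letter (g, 0 \<le> n) = Bm" using \<open>n < 0\<close> Z by (simp add: phiZF)
        then show ?thesis unfolding k using Zn_nc[OF pre, of k] by simp
      qed
      have B: "sufcond s (foldr push_letter (phi_word (gpow g n)) st)"
        unfolding r by (rule suf_app[OF assms(5)]) simp
      have A: "Shape p (foldr push_letter (phi_word (gpow g n)) st)"
        unfolding r unfolding p Z using ShapeZm[OF \<open>n < 0\<close>, of "concat (replicate k Bm) @ st"] by simp
      show ?thesis using A B p by simp
    qed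
  qed
qed


lemma suf_self: "suffix xs (ys @ xs)" by (simp add: suffix_def)
lemma suf_self2: "suffix xs (ys @ zs @ x # xs)" by (simp add: suffix_def)

lemma concat_rep_Suc: "concat (replicate (Suc k) x) = concat (replicate k x) @ x"
proof -
  have "x @ concat (replicate k x) = concat (replicate k x) @ x" by (induct k) simp_all
  then show ?thesis by simp
qed

lemma base_shape: "snd p \<noteq> 0 \<Longrightarrow> Shape p (stk [p])"
proof -
  assume n0: "snd p \<noteq> 0"
  obtain g n where p: "p = (g, n)" by (cases p)
  obtain k where k: "phi_word (gpow g n) = concat (replicate (Suc k) (phi_letter (g, 0 \<le> n)))"
    and ka: "gpow Alpha n = replicate (Suc k) (Alpha, 0 \<le> n)"
    using phi_gpow[of n g] n0 p by auto
  show ?thesis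
  proof (cases g)
    case Y
    have "stk [p] = (Delta,False) # replicate (Suc k) (Alpha, 0 \<le> n) @ (Delta,True) # []"
      unfolding stk_single p fst_conv snd_conv k unfolding Y phiY by (rule Y_nc) simp
    then have "stk [p] = (Delta,False) # gpow Alpha n @ [(Delta,True)]" using ka by simp
    then show ?thesis unfolding p Y using ShapeY by metis
  next
    case Z
    show ?thesis
    proof (cases "n > 0")
      case True
      then have "phi_letter (g, 0 \<le> n) = Bp" using Z by (simp add: phiZT)
      then have "stk [p] = concat (replicate (Suc k) Bp) @ []"
        unfolding stk_single p fst_conv snd_conv k using Zp_nc[of "[]" k] by simp
      then have "stk [p] = [(Alpha,True),(Alpha,True),(Alpha,True),(Alpha,True),(Delta,True)] @ ((Delta,True) # concat (replicate k Bp))" by simp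
      then show ?thesis unfolding p Z using ShapeZp[OF True] by metis
    next
      case False
      with n0 p have "n < 0" by simp
      then have "phi_letter (g, 0 \<le> n) = Bm" using Z by (simp add: phiZF)
      then have "stk [p] = concat (replicate (Suc k) Bm) @ []"
        unfolding stk_single p fst_conv snd_conv k using Zn_nc[of "[]" k] by simp
      then have "stk [p] = Bm @ concat (replicate k Bm)" by simp
      then show ?thesis unfolding p Z using ShapeZm[OF \<open>n < 0\<close>] by metis
    qed
  qed
qed

lemma main_ind:
  "ns \<noteq> [] \<Longrightarrow> \<forall>i<length ns. snd (ns!i) \<noteq> 0 \<Longrightarrow>
   \<forall>i. Suc i < length ns \<longrightarrow> fst (ns!i) \<noteq> fst (ns!Suc i) \<Longrightarrow>
   sufcond s (stk [last ns]) \<Longrightarrow> Shape (hd ns) (stk ns) \<and> sufcond s (stk ns)"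
proof (induct ns)
  case Nil
  then show ?case by simp
next
  case (Cons p rest)
  show ?case
  proof (cases "rest = []")
    case True
    then show ?thesis using Cons.prems base_shape[of p] by auto
  next
    case False
    have nz: "\<forall>i<length rest. snd (rest!i) \<noteq> 0" using Cons.prems(2) by auto
    have alt: "\<forall>i. Suc i < length rest \<longrightarrow> fst (rest!i) \<noteq> fst (rest!Suc i)"
      using Cons.prems(3) by (metis Suc_less_eq length_Cons nth_Cons_Suc)
    have IH: "Shape (hd rest) (stk rest) \<and> sufcond s (stk rest)"
      using Cons.hyps[OF False nz alt] Cons.prems(4) False by simp
    have hr: "hd rest = rest ! 0" using False by (simp add: hd_conv_nth)
    have a1: "fst p \<noteq> fst (hd rest)" using Cons.prems(3) False hr
      by (metis Suc_mono length_Cons length_greater_0_conv nth_Cons_0 nth_Cons_Suc)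
    have a2: "snd p \<noteq> 0" using Cons.prems(2) by force
    have a3: "snd (hd rest) \<noteq> 0" using nz False hr by auto
    show ?thesis unfolding stk_cons list.sel(1) using trans_step[OF a1 a2 a3] IH by blast
  qed
qed

lemma last_suf:
  assumes "snd p \<noteq> 0"
  shows "(fst p = Z \<longrightarrow> sufcond [(Delta,False),(Alpha,False),(Alpha,False),(Alpha,False),(Alpha,False)] (stk [p])
            \<or> sufcond Bp (stk [p]))
       \<and> (fst p = Y \<longrightarrow> sufcond (gpow Alpha (snd p) @ [(Delta,True)]) (stk [p]))"
proof -
  obtain g n where p: "p = (g, n)" by (cases p)
  obtain k where k: "phi_word (gpow g n) = concat (replicate (Suc k) (phi_letter (g, 0 \<le> n)))"
    and ka: "gpow Alpha n = replicate (Suc k) (Alpha, 0 \<le> n)"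
    using phi_gpow[of n g] assms p by auto
  show ?thesis
  proof (cases g)
    case Y
    have "stk [p] = (Delta,False) # replicate (Suc k) (Alpha, 0 \<le> n) @ (Delta,True) # []"
      unfolding stk_single p fst_conv snd_conv k unfolding Y phiY by (rule Y_nc) simp
    then show ?thesis using p Y ka by (auto simp: sufcond_def intro: suffix_ConsI)
  next
    case Z
    show ?thesis
    proof (cases "n > 0")
      case True
      then have "phi_letter (g, 0 \<le> n) = Bp" using Z by (simp add: phiZT)
      then have "stk [p] = concat (replicate (Suc k) Bp) @ []"
        unfolding stk_single p fst_conv snd_conv k using Zp_nc[of "[]" k] by simp
      then have "stk [p] = concat (replicate k Bp) @ Bp"
        by (simp only: append_Nil2 concat_rep_Suc)
      then have "sufcond Bp (stk [p])" unfolding sufcond_def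
        by (intro conjI impI, simp add: suf_self, cases k, simp_all)
      then show ?thesis using p Z by auto
    next
      case False
      with assms p have "n < 0" by simp
      then have "phi_letter (g, 0 \<le> n) = Bm" using Z by (simp add: phiZF)
      then have "stk [p] = concat (replicate (Suc k) Bm) @ []"
        unfolding stk_single p fst_conv snd_conv k using Zn_nc[of "[]" k] by simp
      then have "stk [p] = concat (replicate k Bm) @ Bm"
        by (simp only: append_Nil2 concat_rep_Suc)
      then have "sufcond [(Delta,False),(Alpha,False),(Alpha,False),(Alpha,False),(Alpha,False)] (stk [p])"
      proof -
        have sb: "suffix [(Delta,False),(Alpha,False),(Alpha,False),(Alpha,False),(Alpha,False)] (X @ Bm)" for X
          unfolding suffix_def by (rule exI[of _ "X @ [(Delta,False)]"]) simp
        have "tl (concat (replicate k Bm) @ Bm) = [(Delta,False),(Alpha,False),(Alpha,False),(Alpha,False),(Alpha,False)] \<or>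
              (\<exists>X. tl (concat (replicate k Bm) @ Bm) = X @ Bm)"
          by (cases k) auto
        then have "suffix [(Delta,False),(Alpha,False),(Alpha,False),(Alpha,False),(Alpha,False)] (tl (concat (replicate k Bm) @ Bm))"
          by (metis sb suffix_order.refl)
        then show ?thesis unfolding sufcond_def using sb \<open>stk [p] = concat (replicate k Bm) @ Bm\<close> by auto
      qed
      then show ?thesis using p Z by auto
    qed
  qed
qed

theorem mainTheorem9:
  fixes ns :: "(zy \<times> int) list"
  assumes "length ns \<ge> 1"
    and "\<forall>i < length ns. snd (ns ! i) \<noteq> 0"
    and "\<forall>i. Suc i < length ns \<longrightarrow> fst (ns ! i) \<noteq> fst (ns ! Suc i)"
  shows "(fst (last ns) = Z \<longrightarrow>
            suffix (gpow Delta (-1) @ gpow Alpha (-4)) (reduced_form (phi_word (syllables_word ns)))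
          \<or> suffix (gpow Alpha 4 @ gpow Delta 2) (reduced_form (phi_word (syllables_word ns))))
       \<and> (fst (last ns) = Y \<longrightarrow>
            (\<exists>n::int. n \<noteq> 0 \<and>
               suffix (gpow Alpha n @ gpow Delta 1) (reduced_form (phi_word (syllables_word ns)))))"
proof -
  have ne: "ns \<noteq> []" using assms(1) by auto
  have lnz: "snd (last ns) \<noteq> 0" using assms(2) ne by (simp add: last_conv_nth)
  have g1: "gpow Delta (-1) @ gpow Alpha (-4) = [(Delta,False),(Alpha,False),(Alpha,False),(Alpha,False),(Alpha,False)]"
    by (simp add: gpow_def eval_nat_numeral)
  have g2: "gpow Alpha 4 @ gpow Delta 2 = Bp" by (simp add: gpow_def eval_nat_numeral)
  have g3: "gpow Delta 1 = [(Delta,True)]" by (simp add: gpow_def)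
  have R: "reduced_form (phi_word (syllables_word ns)) = stk ns" by (simp add: stk_def)
  have sc: "sufcond s (stk ns)" if "sufcond s (stk [last ns])" for s
    using main_ind[OF ne assms(2) assms(3) that] by (rule conjunct2)
  have LS: "(fst (last ns) = Z \<longrightarrow> sufcond [(Delta,False),(Alpha,False),(Alpha,False),(Alpha,False),(Alpha,False)] (stk [last ns])
            \<or> sufcond Bp (stk [last ns]))
       \<and> (fst (last ns) = Y \<longrightarrow> sufcond (gpow Alpha (snd (last ns)) @ [(Delta,True)]) (stk [last ns]))"
    by (rule last_suf[OF lnz])
  show ?thesis unfolding R g1 g2 g3
  proof (intro conjI impI)
    assume z: "fst (last ns) = Z"
    have "sufcond [(Delta,False),(Alpha,False),(Alpha,False),(Alpha,False),(Alpha,False)] (stk [last ns])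
            \<or> sufcond Bp (stk [last ns])" using LS z by simp
    then have "sufcond [(Delta,False),(Alpha,False),(Alpha,False),(Alpha,False),(Alpha,False)] (stk ns)
            \<or> sufcond Bp (stk ns)" using sc by blast
    then show "suffix [(Delta,False),(Alpha,False),(Alpha,False),(Alpha,False),(Alpha,False)] (stk ns) \<or> suffix Bp (stk ns)"
      unfolding sufcond_def by blast
  next
    assume y: "fst (last ns) = Y"
    have "sufcond (gpow Alpha (snd (last ns)) @ [(Delta,True)]) (stk [last ns])" using LS y by simp
    then have "sufcond (gpow Alpha (snd (last ns)) @ [(Delta,True)]) (stk ns)" by (rule sc)
    then have "suffix (gpow Alpha (snd (last ns)) @ [(Delta,True)]) (stk ns)" unfolding sufcond_def by (rule conjunct1)
    then show "\<exists>n::int. n \<noteq> 0 \<and> suffix (gpow Alpha n @ [(Delta,True)]) (stk ns)"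
      using lnz by blast
  qed
qed

end
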